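(* Let $K>1$, $M\ge1$, and define $\tilde{\bm{\psi}}^M:\mathbb{R}^{K+M}\to\mathbb{R}^{K+M}$ by $$\tilde{\psi}^M_y(\bm{u})=\frac{\exp(u_y)}{\sum_{y'=1}^K\exp(u_{y'})}\ \ (1\le y\le K),\qquad \tilde{\psi}^M_y(\bm{u})=\frac{\exp(u_y)}{\sum_{y'=1}^{K}\exp(u_{y'})+\exp(u_y)-\max_{y'\in\{1,\dots,K\}}\exp(u_{y'})}\ \ (K+1\le y\le K+M).$$ Then for every $\bm{u}\in\mathbb{R}^{K+M}$: (i) $\tilde{\bm{\psi}}^M(\bm{u})\in\Delta^K\times[0,1]^M$; (ii) $\mathop{\rm argmax}_{y\in\{1,\dots,K+M\}}\tilde{\psi}^M_y(\bm{u})=\mathop{\rm argmax}_{y\in\{1,\dots,K+M\}}u_y$.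
   Context: $\Delta^K$ is the probability simplex in $\mathbb{R}^K$; $\Delta^K\times[0,1]^M$ means the first $K$ coordinates lie in $\Delta^K$ and each of the last $M$ lies in $[0,1]$. This is the multi-expert version of the asymmetric softmax, with one extra coordinate per expert. *)

theory Defs
  imports Complex_Main
begin

text \<open>Vectors in R^(K+M) are functions nat => real, indexed by {1..K+M}.\<close>

definition asym_softmax :: "nat \<Rightarrow> nat \<Rightarrow> (nat \<Rightarrow> real) \<Rightarrow> nat \<Rightarrow> real" where
  "asym_softmax K M u y =
     (if y \<le> K then exp (u y) / (\<Sum>y'=1..K. exp (u y'))
      else exp (u y) / ((\<Sum>y'=1..K. exp (u y')) + exp (u y) - (MAX y'\<in>{1..K}. exp (u y'))))"

definition in_simplex :: "nat \<Rightarrow> (nat \<Rightarrow> real) \<Rightarrow> bool" where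
  "in_simplex K p \<longleftrightarrow> (\<forall>y\<in>{1..K}. 0 \<le> p y) \<and> (\<Sum>y=1..K. p y) = 1"

definition argmax_set :: "'a set \<Rightarrow> ('a \<Rightarrow> real) \<Rightarrow> 'a set" where
  "argmax_set S f = {y \<in> S. \<forall>y'\<in>S. f y' \<le> f y}"

end

theory Submission
  imports Defs
begin

lemma frac_mono_aux:
  fixes a b c :: real
  assumes "c > 0" "0 < a" "a \<le> b"
  shows "a/(c+a) \<le> b/(c+b)" and "a < b \<Longrightarrow> a/(c+a) < b/(c+b)"
  using assms by (auto simp: field_simps intro: mult_strict_left_mono)

lemma basic_facts:
  fixes K :: nat and u :: "nat \<Rightarrow> real"
  assumes "K > 1"
  defines "S \<equiv> (\<Sum>y'=1..K. exp (u y'))" and "m \<equiv> (MAX y'\<in>{1..K}. exp (u y'))"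
  shows "m > 0" "S - m > 0" "\<And>y. y \<in> {1..K} \<Longrightarrow> exp (u y) \<le> m"
        "\<exists>j\<in>{1..K}. exp (u j) = m"
proof -
  have ne: "{1..K} \<noteq> {}" using assms by auto
  have "m \<in> (\<lambda>y'. exp (u y')) ` {1..K}" unfolding m_def
    using ne by (intro Max_in) auto
  then show ex: "\<exists>j\<in>{1..K}. exp (u j) = m" by auto
  then obtain j where j: "j \<in> {1..K}" "exp (u j) = m" by blast
  show "m > 0" using j by (metis exp_gt_zero)
  show "\<And>y. y \<in> {1..K} \<Longrightarrow> exp (u y) \<le> m" unfolding m_def by (intro Max_ge) auto
  obtain j' where j': "j' \<in> {1..K}" "j' \<noteq> j"
  proof (cases "j = 1")
    case True then show ?thesis using that[of 2] assms by auto
  next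
    case False then show ?thesis using that[of 1] assms by auto
  qed
  have "(\<Sum>y'\<in>{j,j'}. exp (u y')) \<le> S" unfolding S_def
    by (rule sum_mono2) (use j j' in auto)
  then have "exp (u j) + exp (u j') \<le> S" using j' by simp
  then show "S - m > 0" using j by (smt (verit) exp_gt_zero)
qed

theorem proposition2:
  fixes K M :: nat and u :: "nat \<Rightarrow> real"
  assumes "K > 1" and "M \<ge> 1"
  shows "in_simplex K (asym_softmax K M u)
       \<and> (\<forall>y\<in>{K+1..K+M}. 0 \<le> asym_softmax K M u y \<and> asym_softmax K M u y \<le> 1)
       \<and> argmax_set {1..K+M} (asym_softmax K M u) = argmax_set {1..K+M} u"
proof -
  define S where "S = (\<Sum>y'=1..K. exp (u y'))"
  define m where "m = (MAX y'\<in>{1..K}. exp (u y'))"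
  define c where "c = S - m"
  note bf = basic_facts[OF assms(1), where u=u, folded S_def m_def]
  have c0: "c > 0" "m > 0" using bf unfolding c_def by auto
  have Sc: "S = c + m" unfolding c_def by simp
  have le_m: "\<And>y. y \<in> {1..K} \<Longrightarrow> exp (u y) \<le> m" using bf by auto
  obtain j where j: "j \<in> {1..K}" "exp (u j) = m" using bf by auto
  have psi: "\<And>y. asym_softmax K M u y =
     (if y \<le> K then exp (u y) / (c + m) else exp (u y) / (c + exp (u y)))"
    unfolding asym_softmax_def S_def[symmetric] m_def[symmetric] c_def by simp
  have part1: "in_simplex K (asym_softmax K M u)"
    unfolding in_simplex_def
  proof
    show "\<forall>y\<in>{1..K}. 0 \<le> asym_softmax K M u y" using c0 by (auto simp: psi)
    have "(\<Sum>y = 1..K. asym_softmax K M u y) = (\<Sum>y = 1..K. exp (u y) / S)"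
      by (rule sum.cong) (auto simp: psi Sc)
    also have "\<dots> = (\<Sum>y = 1..K. exp (u y)) / S" by (rule sum_divide_distrib[symmetric])
    also have "\<dots> = S / S" unfolding S_def ..
    also have "\<dots> = 1" using c0 Sc by simp
    finally show "(\<Sum>y = 1..K. asym_softmax K M u y) = 1" .
  qed
  have part2: "\<forall>y\<in>{K+1..K+M}. 0 \<le> asym_softmax K M u y \<and> asym_softmax K M u y \<le> 1"
  proof
    fix y assume "y \<in> {K+1..K+M}"
    then have "\<not> y \<le> K" by auto
    have "exp (u y) / (c + exp (u y)) \<le> 1" using c0 by (simp add: divide_le_eq_1 add_pos_pos)
    then show "0 \<le> asym_softmax K M u y \<and> asym_softmax K M u y \<le> 1"
      using c0 \<open>\<not> y \<le> K\<close> by (simp add: psi)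
  qed
  define I where "I = {1..K+M}"
  have key: "asym_softmax K M u y \<le> asym_softmax K M u w \<and>
       (u y < u w \<longrightarrow> asym_softmax K M u y < asym_softmax K M u w)"
    if w: "w \<in> I" "\<forall>z\<in>I. u z \<le> u w" and y: "y \<in> I" for w y
  proof -
    have jI: "j \<in> I" using j unfolding I_def by auto
    have mw: "m \<le> exp (u w)" using w(2) jI j(2) by fastforce
    have ey: "exp (u y) \<le> exp (u w)" using w(2) y by simp
    have ep: "exp (u y) > 0" "exp (u w) > 0" by auto
    show ?thesis
    proof (cases "w \<le> K")
      case True
      then have wm: "exp (u w) = m" using le_m[of w] mw w(1) unfolding I_def by auto
      show ?thesis
      proof (cases "y \<le> K")
        case True
        then show ?thesis using \<open>w \<le> K\<close> ey c0
          by (auto simp: psi divide_right_mono divide_strict_right_mono)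
      next
        case False
        have "exp (u y) / (c + exp (u y)) \<le> m / (c + m)"
          using frac_mono_aux(1)[of c "exp (u y)" m] c0 ey wm ep by auto
        moreover have "u y < u w \<Longrightarrow> exp (u y) / (c + exp (u y)) < m / (c + m)"
          using frac_mono_aux(2)[of c "exp (u y)" m] c0 ey wm ep by auto
        ultimately show ?thesis using False True wm by (auto simp: psi)
      qed
    next
      case False
      show ?thesis
      proof (cases "y \<le> K")
        case True
        have ym: "exp (u y) \<le> m" using le_m[of y] True y unfolding I_def by auto
        have a: "exp (u y) / (c + m) \<le> m / (c + m)" using ym c0 by (simp add: divide_right_mono)
        have b: "m / (c + m) \<le> exp (u w) / (c + exp (u w))"
          using frac_mono_aux(1)[of c m "exp (u w)"] c0 mw by auto
        have "u y < u w \<Longrightarrow> exp (u y) / (c + m) < exp (u w) / (c + exp (u w))"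
        proof -
          assume "u y < u w"
          then have lt: "exp (u y) < exp (u w)" by simp
          show ?thesis
          proof (cases "exp (u y) < m")
            case True
            then have "exp (u y) / (c + m) < m / (c + m)" using c0 by (simp add: divide_strict_right_mono)
            then show ?thesis using b by linarith
          next
            case False
            then have "m < exp (u w)" using lt ym by linarith
            then have "m / (c + m) < exp (u w) / (c + exp (u w))"
              using frac_mono_aux(2)[of c m "exp (u w)"] c0 by auto
            then show ?thesis using a by linarith
          qed
        qed
        then show ?thesis using a b True False by (auto simp: psi)
      next
        case yK: False
        show ?thesis using frac_mono_aux[of c "exp (u y)" "exp (u w)"] c0 ey ep yK False
          by (auto simp: psi)
      qed
    qed
  qed
  have fin: "finite I" "I \<noteq> {}" unfolding I_def using assms by auto
  obtain w where w: "w \<in> I" "\<forall>z\<in>I. u z \<le> u w"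
  proof -
    have "Max (u ` I) \<in> u ` I" using fin by simp
    then obtain w where "w \<in> I" "u w = Max (u ` I)" by auto
    moreover have "\<forall>z\<in>I. u z \<le> Max (u ` I)" using fin by simp
    ultimately show ?thesis using that by auto
  qed
  have part3: "argmax_set I (asym_softmax K M u) = argmax_set I u"
  proof
    show "argmax_set I (asym_softmax K M u) \<subseteq> argmax_set I u"
    proof
      fix y assume "y \<in> argmax_set I (asym_softmax K M u)"
      then have y: "y \<in> I" "\<forall>z\<in>I. asym_softmax K M u z \<le> asym_softmax K M u y"
        unfolding argmax_set_def by auto
      have "\<not> u y < u w" using key[OF w y(1)] y(2) w(1) by fastforce
      then show "y \<in> argmax_set I u" using y(1) w(2) unfolding argmax_set_def by force
    qed
  next
    show "argmax_set I u \<subseteq> argmax_set I (asym_softmax K M u)"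
    proof
      fix y assume "y \<in> argmax_set I u"
      then have y: "y \<in> I" "\<forall>z\<in>I. u z \<le> u y" unfolding argmax_set_def by auto
      show "y \<in> argmax_set I (asym_softmax K M u)"
        using key[OF y] y(1) unfolding argmax_set_def by auto
    qed
  qed
  show ?thesis using part1 part2 part3 unfolding I_def by simp
qed

end
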